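(* Let $(b_n)_{n\ge1}$ be a sequence of nonnegative real numbers and $f:\mathbb Z_{>0}\to\mathbb R_{\ge0}$ an increasing function with $\sum_{\alpha\ge1} f(2^\alpha)/2^\alpha<+\infty$. Suppose there is an integer $n_0>0$ such that $b_{n+m}\le b_n+b_m+f(n)+f(m)$ for all integers $m,n\ge n_0$. Then $(b_n/n)_{n\ge1}$ converges to a limit in $\mathbb R_{\ge0}$. *)

theory Defs
  imports "HOL-Analysis.Analysis"
begin

end

theory Submission
  imports Defs "HOL-Analysis.Analysis"
begin

lemma summ_h:
  fixes f :: "nat \<Rightarrow> real"
  assumes f_nonneg: "\<And>n. n \<ge> 1 \<Longrightarrow> f n \<ge> 0"
    and f_mono: "\<And>m n. 1 \<le> m \<Longrightarrow> m \<le> n \<Longrightarrow> f m \<le> f n"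
    and f_sum: "summable (\<lambda>\<alpha>::nat. f (2 ^ (\<alpha> + 1)) / 2 ^ (\<alpha> + 1))"
  shows "summable (\<lambda>j. f j / (real j)^2)"
proof -
  define h where "h j = f j / (real j)^2" for j
  define g where "g \<alpha> = f (2 ^ (\<alpha> + 1)) / 2 ^ (\<alpha> + 1)" for \<alpha> :: nat
  have hnn: "h j \<ge> 0" for j
    using f_nonneg[of j] by (cases "j = 0") (auto simp: h_def)
  have gnn: "g a \<ge> 0" for a
    using f_nonneg[of "2^(a+1)"] by (auto simp: g_def)
  have block: "(\<Sum>j\<in>{2^K..<2^(Suc K)}. h j) \<le> 2 * g K" for K
  proof -
    have "(\<Sum>j\<in>{2^K..<2^(Suc K)}. h j) \<le> (\<Sum>j\<in>{(2::nat)^K..<2^(Suc K)}. f (2^(K+1)) / (2^K)^2)"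
    proof (rule sum_mono)
      fix j assume j: "j \<in> {2^K..<(2::nat)^(Suc K)}"
      have j1: "1 \<le> j" using j by (metis atLeastLessThan_iff le_trans one_le_power one_le_numeral)
      have "f j \<le> f (2^(K+1))" using j j1 by (intro f_mono) auto
      moreover have "(2::real)^K \<le> real j" using j
        by (metis atLeastLessThan_iff of_nat_le_iff of_nat_numeral of_nat_power)
      hence "((2::real)^K)^2 \<le> (real j)^2" by (intro power_mono) auto
      ultimately show "h j \<le> f (2^(K+1)) / (2^K)^2" unfolding h_def
        using f_nonneg[of j] j1
        by (intro frac_le) auto
    qed
    also have "\<dots> = 2^K * (f (2^(K+1)) / (2^K)^2)" by simp
    also have "\<dots> = 2 * g K" unfolding g_def by (simp add: power2_eq_square field_simps)
    finally show ?thesis .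
  qed
  have pow: "(\<Sum>j<2^K. h j) \<le> 2 * (\<Sum>a<K. g a)" for K
  proof (induction K)
    case 0 then show ?case by (simp add: h_def)
  next
    case (Suc K)
    have "{..<(2::nat)^Suc K} = {..<2^K} \<union> {2^K..<2^Suc K}" by (auto)
    hence "(\<Sum>j<2^Suc K. h j) = (\<Sum>j<2^K. h j) + (\<Sum>j\<in>{2^K..<2^(Suc K)}. h j)"
      by (simp add: sum.union_disjoint ivl_disj_int)
    then show ?case using Suc block[of K] by simp
  qed
  show ?thesis unfolding h_def[symmetric]
  proof (rule summableI_nonneg_bounded[where x = "2 * suminf g"])
    fix n
    have "(\<Sum>j<n. h j) \<le> (\<Sum>j<2^n. h j)"
      by (rule sum_mono2) (auto simp: hnn less_exp order.strict_trans)
    also have "\<dots> \<le> 2 * (\<Sum>a<n. g a)" by (rule pow)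
    also have "\<dots> \<le> 2 * suminf g"
      using sum_le_suminf[of g "{..<n}"] f_sum gnn unfolding g_def by auto
    finally show "(\<Sum>j<n. h j) \<le> 2 * suminf g" .
  qed (rule hnn)
qed

theorem propositionA:
  fixes b :: "nat \<Rightarrow> real" and f :: "nat \<Rightarrow> real" and n0 :: nat
  assumes b_nonneg: "\<And>n. n \<ge> 1 \<Longrightarrow> b n \<ge> 0"
    and f_nonneg: "\<And>n. n \<ge> 1 \<Longrightarrow> f n \<ge> 0"
    and f_mono: "\<And>m n. 1 \<le> m \<Longrightarrow> m \<le> n \<Longrightarrow> f m \<le> f n"
    and f_sum: "summable (\<lambda>\<alpha>::nat. f (2 ^ (\<alpha> + 1)) / 2 ^ (\<alpha> + 1))"
    and n0_pos: "n0 > 0"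
    and subadd: "\<And>m n. n \<ge> n0 \<Longrightarrow> m \<ge> n0 \<Longrightarrow> b (n + m) \<le> b n + b m + f n + f m"
  shows "\<exists>L. L \<ge> 0 \<and> (\<lambda>n. b n / real n) \<longlonglongrightarrow> L"
proof -
  define h where "h j = f j / (real j)^2" for j
  have hs: "summable h" unfolding h_def by (rule summ_h[OF f_nonneg f_mono f_sum])
  have hnn: "h j \<ge> 0" for j
    using f_nonneg[of j] by (cases "j = 0") (auto simp: h_def)
  define S where "S = suminf h"
  define P where "P n = 8 * (\<Sum>j\<le>n. h j)" for n
  define T where "T n = 8 * S - P n" for n
  have PS: "P n \<le> 8 * S" for n
    using sum_le_suminf[OF hs, of "{..n}"] hnn unfolding P_def S_def by auto
  have Tnn: "T n \<ge> 0" for n using PS[of n] unfolding T_def by simp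
  have Tlim: "T \<longlonglongrightarrow> 0"
  proof -
    have "(\<lambda>n. 8 * S - 8 * (\<Sum>j\<le>n. h j)) \<longlonglongrightarrow> 8 * S - 8 * S"
      unfolding S_def by (intro tendsto_intros summable_LIMSEQ'[OF hs])
    thus ?thesis unfolding T_def P_def by simp
  qed
  have Pmono: "P m \<le> P n" if "m \<le> n" for m n
    unfolding P_def using that hnn by (auto intro!: sum_mono2)
  have incr: "P (n+m) - P n \<ge> 8 * real m * f n / (real (n+m))^2" if "1 \<le> m" "m \<le> n" for m n
  proof -
    have "{..n+m} = {..n} \<union> {n<..n+m}" by auto
    hence "(\<Sum>j\<le>n+m. h j) = (\<Sum>j\<le>n. h j) + (\<Sum>j\<in>{n<..n+m}. h j)"
      by (metis finite_atMost finite_greaterThanAtMost ivl_disj_int_one(3) sum.union_disjoint)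
    hence "P (n+m) - P n = 8 * (\<Sum>j\<in>{n<..n+m}. h j)"
      unfolding P_def by simp
    moreover have "(\<Sum>j\<in>{n<..n+m}. h j) \<ge> (\<Sum>j\<in>{n<..n+m}. f n / (real (n+m))^2)"
    proof (rule sum_mono)
      fix j assume j: "j \<in> {n<..n+m}"
      have "f n \<le> f j" using j that by (intro f_mono) auto
      moreover have "(real j)^2 \<le> (real (n+m))^2" using j by (intro power_mono) auto
      moreover have "0 < (real j)^2" using j by auto
      ultimately show "f n / (real (n+m))^2 \<le> h j" unfolding h_def
        using f_nonneg[of n] that by (intro frac_le) auto
    qed
    moreover have "(\<Sum>j\<in>{n<..n+m}. f n / (real (n+m))^2) = m * f n / (real (n+m))^2" by simp
    ultimately show ?thesis by simp
  qed
  have key: "n * P n + m * P m + f n + f m \<le> (n+m) * P (n+m)"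
    if "n0 \<le> m" "m \<le> n" "n \<le> 2*m" for n m :: nat
  proof -
    have m1: "1 \<le> m" using that n0_pos by auto
    have fm: "f m \<le> f n" "0 \<le> f n" using that m1 f_mono f_nonneg[of n] by auto
    have i: "P (n+m) - P n \<ge> 8 * real m * f n / (real (n+m))^2" by (rule incr) (use that m1 in auto)
    have pos: "(0::real) < real (n+m)" using m1 by simp
    have "2 * f n \<le> real (n+m) * (8 * real m * f n / (real (n+m))^2)"
    proof -
      have gen: "x * (a / x^2) = a / x" if "x > 0" for x a :: real
        using that by (simp add: power2_eq_square)
      have "real (n+m) * (8 * real m * f n / (real (n+m))^2) = 8 * real m * f n / real (n+m)"
        by (rule gen[OF pos])
      moreover have "2 * f n * real (n+m) \<le> 8 * real m * f n"
      proof -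
        have "2 * real (n+m) \<le> 8 * real m" using that by simp
        from mult_right_mono[OF this fm(2)] show ?thesis by (simp add: algebra_simps)
      qed
      ultimately show ?thesis using pos by (simp add: pos_le_divide_eq)
    qed
    also have "\<dots> \<le> real (n+m) * (P (n+m) - P n)" using i pos by (intro mult_left_mono) auto
    finally have A: "2 * f n \<le> real (n+m) * (P (n+m) - P n)" .
    have B: "real m * P m \<le> real m * P n" using Pmono[of m n] that by (intro mult_left_mono) auto
    show ?thesis using A B fm by (simp add: algebra_simps)
  qed
  define c where "c N = b N / real N + T N" for N
  have mult: "b (q*N) \<le> real (q*N) * (b N / real N - P N + P (q*N))"
    if "n0 \<le> N" "1 \<le> q" for q N
    using that(2)
  proof (induction q rule: less_induct)
    case (less q)
    have N1: "real N > 0" using that n0_pos by simp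
    show ?case
    proof (cases "q = 1")
      case True then show ?thesis using N1 by simp
    next
      case False
      define n' where "n' = q - q div 2"
      define m' where "m' = q div 2"
      have q: "q = n' + m'" "1 \<le> m'" "m' \<le> n'" "n' \<le> 2*m'" "n' < q" "m' < q" "1 \<le> n'"
        using False less.prems unfolding n'_def m'_def by auto
      have qN: "q * N = n'*N + m'*N" using q by (simp add: algebra_simps)
      have ge: "n0 \<le> m'*N" "n0 \<le> n'*N" using q that
        by (metis dual_order.trans mult_1 mult_le_mono1)+
      have IH1: "b (n'*N) \<le> real (n'*N) * (b N / real N - P N + P (n'*N))" using less.IH q by auto
      have IH2: "b (m'*N) \<le> real (m'*N) * (b N / real N - P N + P (m'*N))" using less.IH q by auto
      have sa: "b (n'*N + m'*N) \<le> b (n'*N) + b (m'*N) + f (n'*N) + f (m'*N)"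
        using subadd ge by auto
      have k: "real (n'*N) * P (n'*N) + real (m'*N) * P (m'*N) + f (n'*N) + f (m'*N)
               \<le> real (n'*N + m'*N) * P (n'*N + m'*N)"
        using key[of "m'*N" "n'*N"] ge q by auto
      show ?thesis unfolding qN using IH1 IH2 sa k by (simp add: algebra_simps)
    qed
  qed
  define M where "M N = (\<Sum>r\<in>{n0..<n0+N}. b r)" for N
  have Mnn: "M N \<ge> 0" for N unfolding M_def using b_nonneg n0_pos
    by (intro sum_nonneg) auto
  have fT: "2 * f n / real n \<le> T n" if "1 \<le> n" for n
  proof -
    have "8 * real n * f n / (real (n+n))^2 \<le> P (n+n) - P n" by (rule incr) (use that in auto)
    moreover have "8 * real n * f n / (real (n+n))^2 = 2 * f n / real n"
      using that by (simp add: power2_eq_square field_simps)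
    moreover have "P (n+n) \<le> 8 * S" by (rule PS)
    ultimately show ?thesis unfolding T_def by simp
  qed
  have upper: "b n / real n \<le> c N + M N / real n + T n" if "n0 \<le> N" "n0 + N \<le> n" for N n
  proof -
    define q where "q = (n - n0) div N"
    define r where "r = n0 + (n - n0) mod N"
    have N1: "N \<ge> 1" using that n0_pos by auto
    have nq: "n = q*N + r" unfolding q_def r_def using that by simp
    have q1: "1 \<le> q" unfolding q_def using that N1
      by (metis add_le_imp_le_diff add.commute div_le_mono div_self not_one_le_zero  le_numeral_extra(4) nat_less_le)
    have r: "n0 \<le> r" "r < n0 + N" unfolding r_def using N1 by auto
    have qN: "n0 \<le> q*N" using q1 that by (metis dual_order.trans mult_1 mult_le_mono1)
    have sa: "b n \<le> b (q*N) + b r + f (q*N) + f r" using subadd[OF qN r(1)] nq by simp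
    have br: "b r \<le> M N" unfolding M_def using r b_nonneg n0_pos
      by (intro member_le_sum) auto
    have f1: "f (q*N) \<le> f n" "f r \<le> f n" using nq qN r(1) n0_pos q1 N1 by (auto intro!: f_mono)
    have m: "b (q*N) \<le> real (q*N) * (b N / real N + T N)"
    proof -
      have "b (q*N) \<le> real (q*N) * (b N / real N - P N + P (q*N))" by (rule mult[OF that(1) q1])
      also have "\<dots> \<le> real (q*N) * (b N / real N + T N)"
        using PS[of "q*N"] unfolding T_def by (intro mult_left_mono) auto
      finally show ?thesis .
    qed
    have cnn: "0 \<le> b N / real N + T N" using b_nonneg[of N] N1 Tnn[of N] by simp
    have m2: "real (q*N) * (b N / real N + T N) \<le> real n * (b N / real N + T N)"
      using nq cnn by (intro mult_right_mono) auto
    have n0': "real n > 0" using that N1 by simp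
    have "b n \<le> real n * c N + M N + 2 * f n" using sa br f1 m m2 unfolding c_def by simp
    hence "b n / real n \<le> (real n * c N + M N + 2 * f n) / real n"
      using n0' by (intro divide_right_mono) auto
    also have "\<dots> = c N + M N / real n + 2 * f n / real n" using n0' by (simp add: field_simps)
    also have "\<dots> \<le> c N + M N / real n + T n" using fT[of n] n0' by simp
    finally show ?thesis .
  qed
  define L where "L = Inf (c ` {n0..})"
  have cnn: "c N \<ge> 0" if "n0 \<le> N" for N
    using b_nonneg[of N] Tnn[of N] that n0_pos unfolding c_def by simp
  have bdd: "bdd_below (c ` {n0..})" using cnn by (auto intro!: bdd_belowI[of _ 0])
  have Lle: "L \<le> c N" if "n0 \<le> N" for N unfolding L_def using bdd that by (intro cInf_lower) auto
  have L0: "L \<ge> 0" unfolding L_def using cnn by (intro cInf_greatest) auto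
  have "(\<lambda>n. b n / real n) \<longlonglongrightarrow> L"
  proof (rule LIMSEQ_I)
    fix e :: real assume e: "e > 0"
    have "Inf (c ` {n0..}) < L + e/3" using e unfolding L_def by simp
    then obtain N where N: "N \<in> {n0..}" "c N < L + e/3" using cInf_lessD[of "c ` {n0..}"] by auto
    obtain n1 where n1: "\<And>n. n \<ge> n1 \<Longrightarrow> norm (T n - 0) < e/3"
      using LIMSEQ_D[OF Tlim, of "e/3"] e by auto
    obtain n2 :: nat where n2: "real n2 > 3 * M N / e" using reals_Archimedean2 by blast
    show "\<exists>no. \<forall>n\<ge>no. norm (b n / real n - L) < e"
    proof (intro exI allI impI)
      fix n assume n: "n \<ge> max (n0 + N) (max n1 (Suc n2))"
      have np: "real n > 0" using n by auto
      have Tn: "T n < e/3" using n1[of n] n Tnn[of n] by auto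
      have Mn: "M N / real n < e/3"
      proof -
        have "3 * M N / e < real n" using n n2 by auto
        hence "3 * M N < e * real n" using e by (simp add: field_simps)
        thus ?thesis using np by (simp add: field_simps)
      qed
      have "b n / real n \<le> c N + M N / real n + T n" using upper[of N n] N n by auto
      hence up: "b n / real n < L + e" using Mn N(2) Tn by linarith
      have "b n / real n = c n - T n" unfolding c_def by simp
      moreover have "L \<le> c n" using Lle n by auto
      ultimately have lo: "b n / real n > L - e" using Tn e by linarith
      show "norm (b n / real n - L) < e" using up lo by auto
    qed
  qed
  thus ?thesis using L0 by blast
qed

end
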